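(* For every integer $k\ge2$, the Riemann zeta value $\zeta(k)$ lies in the $\mathbb{Q}$-linear span of $S'_{k,1}$.
   Context: $A(\theta)=\log|2\sin(\theta/2)|$; for $k_u\ge2$, $\mathrm{SLs}(k_1,\dots,k_n)=\int_0^{\pi/3}\int_0^{\theta_n}\cdots\int_0^{\theta_2}\prod_{u=1}^n(\theta_u-\pi/3)^{k_u-2}A(\theta_u)\,d\theta_1\cdots d\theta_n$, with $\mathrm{SLs}(\emptyset)=1$. For $k,d\in\mathbb{Z}_{\ge0}$, $S'_{k,d}=\{\pi^{2m}\mathrm{SLs}(k_1,\dots,k_n): 2m+k_1+\dots+k_n=k,\ m\ge0,\ 0\le n\le d,\ \text{each }k_i\ge3\text{ odd}\}$. *)

theory Defs
  imports "HOL-Analysis.Analysis"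
begin

definition clA :: "real \<Rightarrow> real" where
  "clA \<theta> = ln \<bar>2 * sin (\<theta> / 2)\<bar>"

text \<open>Iterated integral, list given outermost-first:
  SLs_aux (k_n # ... # k_1) x integrates over 0 \<le> theta_1 \<le> ... \<le> theta_n \<le> x.\<close>
fun SLs_aux :: "nat list \<Rightarrow> real \<Rightarrow> real" where
  "SLs_aux [] x = 1"
| "SLs_aux (k # ks) x =
     integral {0..x} (\<lambda>t. (t - pi/3) ^ (k - 2) * clA t * SLs_aux ks t)"

text \<open>SLs(k_1,...,k_n), arguments listed as [k_1,...,k_n].\<close>
definition SLs :: "nat list \<Rightarrow> real" where
  "SLs ks = SLs_aux (rev ks) (pi/3)"

definition Sprime :: "nat \<Rightarrow> nat \<Rightarrow> real set" where
  "Sprime k d = {pi ^ (2*m) * SLs ks | m ks.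
      2*m + sum_list ks = k \<and> length ks \<le> d \<and> (\<forall>j\<in>set ks. 3 \<le> j \<and> odd j)}"

definition qspan :: "real set \<Rightarrow> real set" where
  "qspan S = {x. \<exists>F c. finite F \<and> F \<subseteq> S \<and> (\<forall>s\<in>F. c s \<in> \<rat>) \<and> x = (\<Sum>s\<in>F. c s * s)}"

definition zeta_val :: "nat \<Rightarrow> real" where
  "zeta_val k = (\<Sum>n. 1 / real (Suc n) ^ k)"

end

theory Submission
  imports Defs
begin


definition Cf :: "nat \<Rightarrow> real \<Rightarrow> real" where
  "Cf r x = (\<Sum>n. cos (real n * x) / real n ^ r)"
definition Sf :: "nat \<Rightarrow> real \<Rightarrow> real" where
  "Sf r x = (\<Sum>n. sin (real n * x) / real n ^ r)"

lemma summable_inv_pow: "2 \<le> r \<Longrightarrow> summable (\<lambda>n. 1 / real n ^ r)"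
  using inverse_power_summable[of r] by (simp add: divide_inverse)

lemma bound_cos': "\<bar>cos y\<bar> / real n ^ r \<le> 1 / real n ^ r"
  by (simp add: divide_right_mono)
lemma bound_sin': "\<bar>sin y\<bar> / real n ^ r \<le> 1 / real n ^ r"
  by (simp add: divide_right_mono)
lemma bound_cos: "norm (cos y / real n ^ r) \<le> 1 / real n ^ r"
  using bound_cos' by (simp add: abs_divide)
lemma bound_sin: "norm (sin y / real n ^ r) \<le> 1 / real n ^ r"
  using bound_sin' by (simp add: abs_divide)

lemma Cf_ulim: "2 \<le> r \<Longrightarrow> uniform_limit UNIV (\<lambda>N x. \<Sum>n<N. cos (real n * x) / real n ^ r) (Cf r) sequentially"
  unfolding Cf_def[abs_def]
  by (rule Weierstrass_m_test[where M="\<lambda>n. 1 / real n ^ r"]) (auto intro: bound_cos bound_cos' summable_inv_pow)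
lemma Sf_ulim: "2 \<le> r \<Longrightarrow> uniform_limit UNIV (\<lambda>N x. \<Sum>n<N. sin (real n * x) / real n ^ r) (Sf r) sequentially"
  unfolding Sf_def[abs_def]
  by (rule Weierstrass_m_test[where M="\<lambda>n. 1 / real n ^ r"]) (auto intro: bound_sin bound_sin' summable_inv_pow)

lemma cont_cos_term: "continuous_on UNIV (\<lambda>x. cos (real n * x) / real n ^ r)"
  unfolding divide_inverse by (intro continuous_intros)
lemma cont_sin_term: "continuous_on UNIV (\<lambda>x. sin (real n * x) / real n ^ r)"
  unfolding divide_inverse by (intro continuous_intros)

lemma Cf_cont: "2 \<le> r \<Longrightarrow> continuous_on UNIV (Cf r)"
  by (rule uniform_limit_theorem[OF always_eventually Cf_ulim]) (auto intro!: continuous_on_sum cont_cos_term)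
lemma Sf_cont: "2 \<le> r \<Longrightarrow> continuous_on UNIV (Sf r)"
  by (rule uniform_limit_theorem[OF always_eventually Sf_ulim]) (auto intro!: continuous_on_sum cont_sin_term)

lemma Cf_summable: "2 \<le> r \<Longrightarrow> summable (\<lambda>n. cos (real n * x) / real n ^ r)"
  by (rule summable_comparison_test[OF _ summable_inv_pow]) (auto intro: bound_cos bound_cos')
lemma Sf_summable: "2 \<le> r \<Longrightarrow> summable (\<lambda>n. sin (real n * x) / real n ^ r)"
  by (rule summable_comparison_test[OF _ summable_inv_pow]) (auto intro: bound_sin bound_sin')

lemma term_shift: assumes "3 \<le> r" shows "real n * y / real n ^ r = y / real n ^ (r - 1)"
proof -
  obtain r' where r': "r = Suc r'" "r' \<ge> 2" using assms by (cases r) auto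
  show ?thesis
  proof (cases "n = 0")
    case True then show ?thesis using r' by auto
  next
    case False
    then show ?thesis using r' by simp
  qed
qed

lemma Cf_deriv:
  assumes "3 \<le> r" shows "(Cf r has_real_derivative - Sf (r - 1) x) (at x)"
proof -
  have r2: "2 \<le> r - 1" using assms by simp
  have uc: "uniformly_convergent_on UNIV (\<lambda>N x. \<Sum>n<N. - (real n * sin (real n * x)) / real n ^ r)"
  proof (rule Weierstrass_m_test'[where M="\<lambda>n. 1 / real n ^ (r - 1)"])
    fix n x
    show "norm (- (real n * sin (real n * x)) / real n ^ r) \<le> 1 / real n ^ (r - 1)"
      using term_shift[OF assms, of n "sin (real n * x)"] bound_sin[of "real n * x" n "r - 1"]
      by simp
  qed (rule summable_inv_pow[OF r2])
  have "((\<lambda>x. \<Sum>n. cos (real n * x) / real n ^ r) has_field_derivative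
        (\<Sum>n. - (real n * sin (real n * x)) / real n ^ r)) (at x)"
  proof (rule has_field_derivative_series'(2)[OF convex_UNIV _ uc])
    fix n and y :: real
    have "((\<lambda>x. cos (real n * x) * inverse (real n ^ r)) has_field_derivative - (real n * sin (real n * y)) * inverse (real n ^ r)) (at y)"
      by (auto intro!: derivative_eq_intros)
    then show "((\<lambda>x. cos (real n * x) / real n ^ r) has_field_derivative - (real n * sin (real n * y)) / real n ^ r) (at y within UNIV)"
      by (simp add: divide_inverse)
  qed (use assms in \<open>auto intro!: Cf_summable[of r 0]\<close>)
  moreover have "(\<Sum>n. - (real n * sin (real n * x)) / real n ^ r) = - Sf (r - 1) x"
    unfolding Sf_def using term_shift[OF assms] Sf_summable[OF r2]
    by (simp add: suminf_minus)
  ultimately show ?thesis unfolding Cf_def[abs_def] by simp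
qed

lemma Sf_deriv:
  assumes "3 \<le> r" shows "(Sf r has_real_derivative Cf (r - 1) x) (at x)"
proof -
  have r2: "2 \<le> r - 1" using assms by simp
  have uc: "uniformly_convergent_on UNIV (\<lambda>N x. \<Sum>n<N. (real n * cos (real n * x)) / real n ^ r)"
  proof (rule Weierstrass_m_test'[where M="\<lambda>n. 1 / real n ^ (r - 1)"])
    fix n x
    show "norm ((real n * cos (real n * x)) / real n ^ r) \<le> 1 / real n ^ (r - 1)"
      using term_shift[OF assms, of n "cos (real n * x)"] bound_cos[of "real n * x" n "r - 1"]
      by simp
  qed (rule summable_inv_pow[OF r2])
  have "((\<lambda>x. \<Sum>n. sin (real n * x) / real n ^ r) has_field_derivative
        (\<Sum>n. (real n * cos (real n * x)) / real n ^ r)) (at x)"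
  proof (rule has_field_derivative_series'(2)[OF convex_UNIV _ uc])
    fix n and y :: real
    have "((\<lambda>x. sin (real n * x) * inverse (real n ^ r)) has_field_derivative (real n * cos (real n * y)) * inverse (real n ^ r)) (at y)"
      by (auto intro!: derivative_eq_intros)
    then show "((\<lambda>x. sin (real n * x) / real n ^ r) has_field_derivative (real n * cos (real n * y)) / real n ^ r) (at y within UNIV)"
      by (simp add: divide_inverse)
  qed (use assms in \<open>auto intro!: Sf_summable[of r 0]\<close>)
  moreover have "(\<Sum>n. (real n * cos (real n * x)) / real n ^ r) = Cf (r - 1) x"
    unfolding Cf_def using term_shift[OF assms] by simp
  ultimately show ?thesis unfolding Sf_def[abs_def] by simp
qed

lemma zeta_sums0: "2 \<le> r \<Longrightarrow> (\<lambda>n. 1 / real n ^ r) sums zeta_val r"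
proof -
  assume r: "2 \<le> r"
  have "summable (\<lambda>n. 1 / real (Suc n) ^ r)"
    using summable_inv_pow[OF r] by (subst summable_Suc_iff)
  then have "(\<lambda>n. 1 / real (Suc n) ^ r) sums zeta_val r" unfolding zeta_val_def by (simp add: summable_sums)
  moreover have "(0::real) ^ r = 0" using r by simp
  ultimately show ?thesis by (subst (asm) sums_Suc_iff) simp
qed

lemma Cf_0: "2 \<le> r \<Longrightarrow> Cf r 0 = zeta_val r"
  unfolding Cf_def using zeta_sums0 by (simp add: sums_iff)
lemma Sf_0: "Sf r 0 = 0"
  unfolding Sf_def by simp

lemma Cf_2pi: "2 \<le> r \<Longrightarrow> Cf r (2*pi) = zeta_val r"
proof -
  assume r: "2 \<le> r"
  have "cos (real n * (2*pi)) = 1" for n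
    using cos_int_2pin[of "int n"] by (simp add: mult.commute)
  then show ?thesis unfolding Cf_def using zeta_sums0[OF r] by (simp add: sums_iff)
qed
lemma Sf_2pi: "Sf r (2*pi) = 0"
proof -
  have "sin (real n * (2*pi)) = 0" for n
    using sin_npi[of "2*n"] by (simp add: mult.commute mult.left_commute)
  then show ?thesis unfolding Sf_def by simp
qed



definition Li2 :: "complex \<Rightarrow> complex" where
  "Li2 z = (\<Sum>n. (1 / of_nat n ^ 2) * z ^ n)"

lemma Li2_coeff_bound: "norm (z::complex) \<le> 1 \<Longrightarrow> norm ((1 / of_nat n ^ 2) * z ^ n) \<le> 1 / real n ^ 2"
proof -
  assume z: "norm z \<le> 1"
  have "norm ((1 / (of_nat n ^ 2 :: complex)) * z ^ n) = (1 / real n ^ 2) * norm z ^ n"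
    by (simp add: norm_mult norm_divide norm_power)
  also have "\<dots> \<le> (1 / real n ^ 2) * 1"
    by (intro mult_left_mono power_le_one) (use z in auto)
  finally show ?thesis by simp
qed

lemma Li2_cont: "continuous_on (cball 0 1) Li2"
proof -
  have ul: "uniform_limit (cball 0 1) (\<lambda>N (z::complex). \<Sum>n<N. (1 / of_nat n ^ 2) * z ^ n) (\<lambda>z. \<Sum>n. (1 / of_nat n ^ 2) * z ^ n) sequentially"
    by (rule Weierstrass_m_test[where M="\<lambda>n. 1 / real n ^ 2"])
       (use Li2_coeff_bound summable_inv_pow in auto)
  show ?thesis unfolding Li2_def[abs_def]
  proof (rule uniform_limit_theorem[OF _ ul])
    show "\<forall>\<^sub>F N in sequentially. continuous_on (cball 0 1) (\<lambda>z::complex. \<Sum>n<N. (1 / of_nat n ^ 2) * z ^ n)"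
      by (intro always_eventually allI continuous_on_sum) (intro continuous_intros)
  qed auto
qed

lemma Li2_deriv:
  assumes z0: "z \<noteq> 0" and z1: "norm z < 1"
  shows "(Li2 has_field_derivative (- Ln (1 - z) / z)) (at z)"
proof -
  let ?c = "\<lambda>n. (1 / of_nat n ^ 2 :: complex)"
  have sm: "summable (\<lambda>n. ?c n * 1 ^ n)"
  proof -
    have "summable (\<lambda>n. complex_of_real (1 / real n ^ 2))"
      using summable_inv_pow[of 2] by (simp only: summable_complex_of_real)
    then show ?thesis by simp
  qed
  have D: "(Li2 has_field_derivative (\<Sum>n. diffs ?c n * z ^ n)) (at z)"
    unfolding Li2_def[abs_def] by (rule termdiffs_strong[OF sm]) (use z1 in simp)
  have "(\<lambda>n. - ((-(-z))^n) / of_nat n) sums Ln (1 + - z)"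
    by (rule Ln_series') (use z1 in simp)
  then have "(\<lambda>n. z ^ n / of_nat n) sums (- Ln (1 - z))"
    using sums_minus by fastforce
  then have "(\<lambda>n. z ^ Suc n / of_nat (Suc n)) sums (- Ln (1 - z))"
    by (subst sums_Suc_iff) simp
  moreover have "z ^ Suc n / of_nat (Suc n) = z * (diffs ?c n * z ^ n)" for n
  proof -
    have kk: "\<And>k::complex. k \<noteq> 0 \<Longrightarrow> k * (1 / k ^ 2) = 1 / k"
      by (simp add: power2_eq_square)
    have ne: "(of_nat (Suc n) :: complex) \<noteq> 0" by (rule of_nat_neq_0)
    have "diffs ?c n = 1 / of_nat (Suc n)"
      unfolding diffs_def using kk[OF ne] by simp
    then show ?thesis by simp
  qed
  ultimately have "(\<lambda>n. z * (diffs ?c n * z ^ n)) sums (- Ln (1 - z))" by simp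
  then have "(\<lambda>n. diffs ?c n * z ^ n) sums (- Ln (1 - z) / z)"
    by (rule sums_mult_D[OF _ z0])
  then have "(\<Sum>n. diffs ?c n * z ^ n) = - Ln (1 - z) / z" by (simp add: sums_iff)
  with D show ?thesis by simp
qed

lemma Li2_circle_deriv:
  assumes r: "0 < r" "r < 1"
  shows "((\<lambda>t. Li2 (of_real r * cis t)) has_vector_derivative (- \<i> * Ln (1 - of_real r * cis t))) (at t)"
proof -
  define g where "g w = of_real r * exp (\<i> * w)" for w :: complex
  have z0: "g (of_real t) \<noteq> 0" and z1: "norm (g (of_real t)) < 1"
    using r by (auto simp: g_def norm_mult)
  have dg: "(g has_field_derivative (\<i> * g (of_real t))) (at (of_real t))"
    unfolding g_def by (auto intro!: derivative_eq_intros)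
  have "((\<lambda>w. Li2 (g w)) has_field_derivative (- Ln (1 - g (of_real t)) / g (of_real t)) * (\<i> * g (of_real t))) (at (of_real t))"
    by (rule DERIV_chain2[OF Li2_deriv[OF z0 z1] dg])
  moreover have "(- Ln (1 - g (of_real t)) / g (of_real t)) * (\<i> * g (of_real t)) = - \<i> * Ln (1 - of_real r * cis t)"
    using z0 by (simp add: g_def cis_conv_exp)
  ultimately have "((\<lambda>w. Li2 (g w)) has_field_derivative (- \<i> * Ln (1 - of_real r * cis t))) (at (of_real t))"
    by simp
  from has_vector_derivative_real_field[OF this, of UNIV]
  show ?thesis by (simp add: g_def cis_conv_exp)
qed

lemma Li2_circle_integral:
  assumes r: "0 < r" "r < 1" and xs: "x \<le> s"
  shows "((\<lambda>t. - \<i> * Ln (1 - of_real r * cis t)) has_integral (Li2 (of_real r * cis s) - Li2 (of_real r * cis x))) {x..s}"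
  by (rule fundamental_theorem_of_calculus[OF xs])
     (rule has_vector_derivative_at_within, rule Li2_circle_deriv[OF r])



lemma Ln_bound:
  assumes "0 < m" "m \<le> norm w" "norm w \<le> 2"
  shows "norm (Ln w) \<le> 1 + \<bar>ln m\<bar> + pi"
proof -
  have w0: "w \<noteq> 0" using assms by auto
  have re: "Re (Ln w) = ln (norm w)" using Re_Ln[OF w0] .
  have "ln (norm w) \<le> ln 2" using assms w0 by simp
  also have "ln 2 \<le> (1::real)" using ln_2_less_1 by simp
  finally have a: "ln (norm w) \<le> 1" .
  have b: "ln m \<le> ln (norm w)" by (rule ln_le_cancel_iff[THEN iffD2]) (use assms in auto)
  have c: "\<bar>Im (Ln w)\<bar> \<le> pi" using mpi_less_Im_Ln[OF w0] Im_Ln_le_pi[OF w0] by linarith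
  have "norm (Ln w) \<le> \<bar>Re (Ln w)\<bar> + \<bar>Im (Ln w)\<bar>" by (rule cmod_le)
  also have "\<dots> \<le> 1 + \<bar>ln m\<bar> + pi" using a b c re by linarith
  finally show ?thesis .
qed

lemma cos_lt_1: "0 < t \<Longrightarrow> t < 2*pi \<Longrightarrow> cos t < 1"
proof -
  assume t: "0 < t" "t < 2*pi"
  have "cos t \<noteq> 1"
  proof
    assume "cos t = 1"
    then obtain n :: int where n: "t = real_of_int n * 2 * pi" using cos_one_2pi_int by blast
    then have "0 < real_of_int n" "real_of_int n < 1" using t by (auto simp: zero_less_mult_iff)
    then have "0 < n" "n < 1" by simp_all
    then show False by simp
  qed
  then show ?thesis using cos_le_one[of t] by linarith
qed

lemma Abel_Li2:
  assumes xs: "0 < x" "x \<le> s" "s < 2*pi"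
  shows "((\<lambda>t. - \<i> * Ln (1 - cis t)) has_integral (Li2 (cis s) - Li2 (cis x))) {x..s}"
proof -
  define \<rho> where "\<rho> k = 1 + - inverse (real (Suc (Suc k)))" for k
  have \<rho>: "0 < \<rho> k" "\<rho> k < 1" for k
    unfolding \<rho>_def by (auto simp: field_simps)
  have \<rho>lim: "\<rho> \<longlonglongrightarrow> 1"
    unfolding \<rho>_def using LIMSEQ_Suc[OF LIMSEQ_inverse_real_of_nat_add_minus[of 1]] by simp
  have ccos: "continuous_on {x..s} (\<lambda>t. 1 - cos t)" by (intro continuous_intros)
  obtain u0 where u0: "u0 \<in> {x..s}" "\<And>t. t \<in> {x..s} \<Longrightarrow> 1 - cos u0 \<le> 1 - cos t"
    using continuous_attains_inf[OF compact_Icc _ ccos] xs by auto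
  define m where "m = min 1 (1 - cos u0)"
  have m0: "0 < m" using cos_lt_1[of u0] u0 xs unfolding m_def by auto
  have wb: "m \<le> norm (1 - of_real r * cis t) \<and> norm (1 - of_real r * cis t) \<le> 2"
    if t: "t \<in> {x..s}" and r: "0 \<le> r" "r \<le> 1" for t r
  proof
    have "m \<le> 1 - r * cos t"
    proof (cases "cos t \<le> 0")
      case True
      then have "r * cos t \<le> 0" using r by (simp add: mult_nonneg_nonpos)
      then show ?thesis unfolding m_def by linarith
    next
      case False
      then have "r * cos t \<le> cos t" using r by (simp add: mult_left_le_one_le)
      then show ?thesis using u0(2)[OF t] unfolding m_def by linarith
    qed
    also have "1 - r * cos t = Re (1 - of_real r * cis t)" by simp
    also have "\<dots> \<le> norm (1 - of_real r * cis t)" using abs_Re_le_cmod[of "1 - of_real r * cis t"] by linarith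
    finally show "m \<le> norm (1 - of_real r * cis t)" .
    have "norm (1 - of_real r * cis t) \<le> norm (1::complex) + norm (of_real r * cis t)"
      by (rule norm_triangle_ineq4)
    also have "\<dots> \<le> 2" using r by (simp add: norm_mult)
    finally show "norm (1 - of_real r * cis t) \<le> 2" .
  qed
  show ?thesis
  proof (rule has_integral_dominated_convergence[where f="\<lambda>k t. - \<i> * Ln (1 - of_real (\<rho> k) * cis t)"
        and y="\<lambda>k. Li2 (of_real (\<rho> k) * cis s) - Li2 (of_real (\<rho> k) * cis x)"
        and h="\<lambda>t. 1 + \<bar>ln m\<bar> + pi"])
    show "((\<lambda>t. - \<i> * Ln (1 - of_real (\<rho> k) * cis t)) has_integral
          (Li2 (of_real (\<rho> k) * cis s) - Li2 (of_real (\<rho> k) * cis x))) {x..s}" for k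
      by (rule Li2_circle_integral[OF \<rho> xs(2)])
    show "(\<lambda>t. 1 + \<bar>ln m\<bar> + pi) integrable_on {x..s}"
      by (intro integrable_continuous_real continuous_intros)
    show "\<forall>t\<in>{x..s}. norm (- \<i> * Ln (1 - of_real (\<rho> k) * cis t)) \<le> 1 + \<bar>ln m\<bar> + pi" for k
    proof
      fix t assume t: "t \<in> {x..s}"
      have "norm (Ln (1 - of_real (\<rho> k) * cis t)) \<le> 1 + \<bar>ln m\<bar> + pi"
        using wb[OF t, of "\<rho> k"] \<rho>[of k] by (intro Ln_bound m0) auto
      then show "norm (- \<i> * Ln (1 - of_real (\<rho> k) * cis t)) \<le> 1 + \<bar>ln m\<bar> + pi"
        by (simp add: norm_mult)
    qed
    show "\<forall>t\<in>{x..s}. (\<lambda>k. - \<i> * Ln (1 - of_real (\<rho> k) * cis t)) \<longlonglongrightarrow> - \<i> * Ln (1 - cis t)"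
    proof
      fix t assume t: "t \<in> {x..s}"
      have "(\<lambda>k. 1 - of_real (\<rho> k) * cis t) \<longlonglongrightarrow> 1 - of_real 1 * cis t"
        by (intro tendsto_intros \<rho>lim)
      moreover have "1 - cis t \<notin> \<real>\<^sub>\<le>\<^sub>0"
        using cos_lt_1[of t] t xs by (auto simp: complex_nonpos_Reals_iff)
      ultimately have "(\<lambda>k. Ln (1 - of_real (\<rho> k) * cis t)) \<longlonglongrightarrow> Ln (1 - cis t)"
        using isCont_tendsto_compose[OF continuous_at_Ln] by fastforce
      then show "(\<lambda>k. - \<i> * Ln (1 - of_real (\<rho> k) * cis t)) \<longlonglongrightarrow> - \<i> * Ln (1 - cis t)"
        by (rule tendsto_mult_left)
    qed
    have lim1: "(\<lambda>k. Li2 (of_real (\<rho> k) * cis y)) \<longlonglongrightarrow> Li2 (cis y)" for y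
    proof (rule continuous_on_tendsto_compose[OF Li2_cont])
      show "(\<lambda>k. of_real (\<rho> k) * cis y) \<longlonglongrightarrow> cis y"
        using tendsto_mult[OF tendsto_of_real[OF \<rho>lim] tendsto_const[of "cis y"]] by simp
      show "cis y \<in> cball 0 1" by simp
      show "\<forall>\<^sub>F k in sequentially. of_real (\<rho> k) * cis y \<in> cball 0 1"
        using \<rho> by (intro always_eventually) (auto simp: norm_mult less_imp_le)
    qed
    show "(\<lambda>k. Li2 (of_real (\<rho> k) * cis s) - Li2 (of_real (\<rho> k) * cis x)) \<longlonglongrightarrow> Li2 (cis s) - Li2 (cis x)"
      by (intro tendsto_diff lim1)
  qed
qed



lemma Ln_one_minus_cis:
  assumes t: "0 < t" "t < 2*pi"
  shows "Ln (1 - cis t) = of_real (ln (2 * sin (t/2))) + \<i> * of_real ((t - pi)/2)"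
proof -
  have s0: "0 < sin (t/2)" using t by (intro sin_gt_zero) auto
  have c1: "cos ((t - pi)/2) = sin (t/2)"
    using cos_diff[of "t/2" "pi/2"] by (simp add: diff_divide_distrib)
  have s1: "sin ((t - pi)/2) = - cos (t/2)"
    using sin_diff[of "t/2" "pi/2"] by (simp add: diff_divide_distrib)
  have ct: "cos t = 1 - 2 * (sin (t/2))^2"
    using cos_double_sin[of "t/2"] by simp
  have st: "sin t = 2 * sin (t/2) * cos (t/2)"
    using sin_double[of "t/2"] by simp
  have "exp (of_real (ln (2 * sin (t/2))) + \<i> * of_real ((t - pi)/2)) = of_real (2 * sin (t/2)) * cis ((t - pi)/2)"
    using s0 by (simp add: exp_add exp_of_real cis_conv_exp)
  also have "\<dots> = 1 - cis t"
    by (simp add: complex_eq_iff c1 s1 ct st power2_eq_square)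
  finally have e: "exp (of_real (ln (2 * sin (t/2))) + \<i> * of_real ((t - pi)/2)) = 1 - cis t" .
  have "Ln (exp (of_real (ln (2 * sin (t/2))) + \<i> * of_real ((t - pi)/2))) = of_real (ln (2 * sin (t/2))) + \<i> * of_real ((t - pi)/2)"
    by (rule Ln_exp) (use t in auto)
  then show ?thesis using e by simp
qed

lemma Li2_cis_summable: "summable (\<lambda>n. (1 / of_nat n ^ 2) * cis t ^ n)"
proof (rule summable_norm_cancel, rule summable_comparison_test[OF _ summable_inv_pow[of 2]])
  show "\<exists>N. \<forall>n\<ge>N. norm (norm ((1 / of_nat n ^ 2) * cis t ^ n)) \<le> 1 / real n ^ 2"
    using Li2_coeff_bound[of "cis t"] by simp
qed simp

lemma Re_Li2_cis: "Re (Li2 (cis t)) = Cf 2 t"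
proof -
  have "\<And>n. Re (cis t ^ n) = cos (real n * t)" by (simp only: Complex.DeMoivre) simp
  then show ?thesis
    unfolding Li2_def Cf_def Re_suminf[OF Li2_cis_summable] by simp
qed
lemma Im_Li2_cis: "Im (Li2 (cis t)) = Sf 2 t"
proof -
  have "\<And>n. Im (cis t ^ n) = sin (real n * t)" by (simp only: Complex.DeMoivre) simp
  then show ?thesis
    unfolding Li2_def Sf_def Im_suminf[OF Li2_cis_summable] by simp
qed

lemma clA_eq: "0 < t \<Longrightarrow> t < 2*pi \<Longrightarrow> clA t = ln (2 * sin (t/2))"
proof -
  assume t: "0 < t" "t < 2*pi"
  have "0 < sin (t/2)" using t by (intro sin_gt_zero) auto
  then show ?thesis unfolding clA_def by simp
qed

lemma C2_int:
  assumes xs: "0 < x" "x \<le> s" "s < 2*pi"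
  shows "((\<lambda>t. (t - pi)/2) has_integral (Cf 2 s - Cf 2 x)) {x..s}"
proof -
  have "(Re \<circ> (\<lambda>t. - \<i> * Ln (1 - cis t)) has_integral Re (Li2 (cis s) - Li2 (cis x))) {x..s}"
    by (rule has_integral_linear[OF Abel_Li2[OF xs] bounded_linear_Re])
  then have A: "(Re \<circ> (\<lambda>t. - \<i> * Ln (1 - cis t)) has_integral (Cf 2 s - Cf 2 x)) {x..s}"
    by (simp add: Re_Li2_cis)
  have eq: "(Re \<circ> (\<lambda>t. - \<i> * Ln (1 - cis t))) t = (t - pi)/2" if "t \<in> {x..s}" for t
    using that xs Ln_one_minus_cis[of t] by simp
  show ?thesis by (rule has_integral_cong[OF eq, THEN iffD1, OF _ A])
qed

lemma S2_int:
  assumes xs: "0 < x" "x \<le> s" "s < 2*pi"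
  shows "((\<lambda>t. - clA t) has_integral (Sf 2 s - Sf 2 x)) {x..s}"
proof -
  have "(Im \<circ> (\<lambda>t. - \<i> * Ln (1 - cis t)) has_integral Im (Li2 (cis s) - Li2 (cis x))) {x..s}"
    by (rule has_integral_linear[OF Abel_Li2[OF xs] bounded_linear_Im])
  then have A: "(Im \<circ> (\<lambda>t. - \<i> * Ln (1 - cis t)) has_integral (Sf 2 s - Sf 2 x)) {x..s}"
    by (simp add: Im_Li2_cis)
  have eq: "(Im \<circ> (\<lambda>t. - \<i> * Ln (1 - cis t))) t = - clA t" if "t \<in> {x..s}" for t
    using that xs Ln_one_minus_cis[of t] clA_eq[of t] by simp
  show ?thesis by (rule has_integral_cong[OF eq, THEN iffD1, OF _ A])
qed

lemma deriv_from_int: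
  assumes I: "\<And>x s. 0 < x \<Longrightarrow> x \<le> s \<Longrightarrow> s < 2*pi \<Longrightarrow> (h has_integral (F s - F x)) {x..s}"
    and c: "continuous_on {0<..<2*pi} h" and t: "0 < t" "t < 2*pi"
  shows "(F has_real_derivative h t) (at t)"
proof -
  define a where "a = t/2"
  define b where "b = t/2 + pi"
  have ab: "0 < a" "a < t" "t < b" "b < 2*pi" using t by (auto simp: a_def b_def)
  have cab: "continuous_on {a..b} h" by (rule continuous_on_subset[OF c]) (use ab in auto)
  have "((\<lambda>u. integral {a..u} h) has_vector_derivative h t) (at t within {a..b})"
    by (rule integral_has_vector_derivative[OF cab]) (use ab in auto)
  moreover have "at t within {a..b} = at t"
    by (rule at_within_interior) (use ab in auto)
  ultimately have d0: "((\<lambda>u. integral {a..u} h) has_real_derivative h t) (at t)"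
    by (simp add: has_real_derivative_iff_has_vector_derivative)
  have d: "((\<lambda>u. F a + integral {a..u} h) has_real_derivative h t) (at t)"
    using DERIV_add[OF DERIV_const d0] by simp
  show ?thesis
  proof (rule has_field_derivative_transform_within_open[OF d, of "{a<..<b}"])
    fix u assume u: "u \<in> {a<..<b}"
    have "(h has_integral (F u - F a)) {a..u}" using I[of a u] ab u by auto
    then show "F a + integral {a..u} h = F u" by (simp add: integral_unique)
  qed (use ab in auto)
qed

lemma clA_cont: "continuous_on {0<..<2*pi} clA"
proof -
  have "continuous_on {0<..<2*pi} (\<lambda>t. ln (\<bar>2 * sin (t/2)\<bar>))"
  proof (intro continuous_intros ballI)
    fix t :: real assume "t \<in> {0<..<2*pi}"
    then have "0 < sin (t/2)" by (intro sin_gt_zero) auto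
    then show "\<bar>2 * sin (t/2)\<bar> \<noteq> 0" by simp
  qed simp_all
  then show ?thesis unfolding clA_def[abs_def] .
qed

lemma Cf2_deriv: assumes "0 < t" "t < 2*pi" shows "(Cf 2 has_real_derivative (t - pi)/2) (at t)"
proof -
  have c: "continuous_on {0<..<2*pi} (\<lambda>t::real. (t - pi)/2)" by (intro continuous_intros) simp
  show ?thesis by (rule deriv_from_int[OF C2_int c assms])
qed

lemma Sf2_deriv: assumes "0 < t" "t < 2*pi" shows "(Sf 2 has_real_derivative - clA t) (at t)"
proof -
  have c: "continuous_on {0<..<2*pi} (\<lambda>t. - clA t)" by (intro continuous_intros clA_cont)
  show ?thesis by (rule deriv_from_int[OF S2_int c assms])
qed



definition polyw :: "nat \<Rightarrow> (real \<Rightarrow> real) \<Rightarrow> bool" where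
  "polyw r f \<longleftrightarrow> (\<exists>c. (\<forall>i. c i \<in> \<rat>) \<and> (\<forall>x\<in>{0..2*pi}. f x = (\<Sum>i\<le>r. c i * pi ^ (r - i) * x ^ i)))"

lemma polyw_cong: "polyw r f \<Longrightarrow> (\<And>x. x \<in> {0..2*pi} \<Longrightarrow> f x = g x) \<Longrightarrow> polyw r g"
  unfolding polyw_def by metis

lemma polyw_add: assumes "polyw r f" "polyw r g" shows "polyw r (\<lambda>x. f x + g x)"
proof -
  obtain c where c: "\<forall>i. c i \<in> \<rat>" "\<forall>x\<in>{0..2*pi}. f x = (\<Sum>i\<le>r. c i * pi ^ (r - i) * x ^ i)"
    using assms(1) unfolding polyw_def by blast
  obtain d where d: "\<forall>i. d i \<in> \<rat>" "\<forall>x\<in>{0..2*pi}. g x = (\<Sum>i\<le>r. d i * pi ^ (r - i) * x ^ i)"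
    using assms(2) unfolding polyw_def by blast
  show ?thesis unfolding polyw_def
  proof (intro exI[of _ "\<lambda>i. c i + d i"] conjI allI ballI)
    show "c i + d i \<in> \<rat>" for i using c d by auto
    fix x assume x: "x \<in> {0..2*pi}"
    show "f x + g x = (\<Sum>i\<le>r. (c i + d i) * pi ^ (r - i) * x ^ i)"
      using c(2) d(2) x by (simp add: sum.distrib ring_distribs)
  qed
qed

lemma polyw_scale: assumes "polyw r f" "q \<in> \<rat>" shows "polyw r (\<lambda>x. q * f x)"
proof -
  obtain c where c: "\<forall>i. c i \<in> \<rat>" "\<forall>x\<in>{0..2*pi}. f x = (\<Sum>i\<le>r. c i * pi ^ (r - i) * x ^ i)"
    using assms(1) unfolding polyw_def by blast
  show ?thesis unfolding polyw_def
  proof (intro exI[of _ "\<lambda>i. q * c i"] conjI allI ballI)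
    show "q * c i \<in> \<rat>" for i using c assms(2) by auto
    fix x assume x: "x \<in> {0..2*pi}"
    show "q * f x = (\<Sum>i\<le>r. (q * c i) * pi ^ (r - i) * x ^ i)"
      using c(2) x by (simp add: sum_distrib_left mult.assoc)
  qed
qed

lemma polyw_mono: assumes "j \<le> r" "q \<in> \<rat>" shows "polyw r (\<lambda>x. q * pi ^ (r - j) * x ^ j)"
  unfolding polyw_def
proof (intro exI[of _ "\<lambda>i. if i = j then q else 0"] conjI allI ballI)
  show "(if i = j then q else 0) \<in> \<rat>" for i using assms by auto
  fix x :: real
  have "(\<Sum>i\<le>r. (if i = j then q else 0) * pi ^ (r - i) * x ^ i) = (\<Sum>i\<le>r. if i = j then q * pi ^ (r - i) * x ^ i else 0)"
    by (intro sum.cong) auto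
  also have "\<dots> = q * pi ^ (r - j) * x ^ j" using assms by simp
  finally show "q * pi ^ (r - j) * x ^ j = (\<Sum>i\<le>r. (if i = j then q else 0) * pi ^ (r - i) * x ^ i)" by simp
qed

lemma polyw_const: "q \<in> \<rat> \<Longrightarrow> polyw r (\<lambda>x. q * pi ^ r)"
  using polyw_mono[of 0 r q] by simp

lemma polyw_at_2pi: assumes "polyw r f" shows "\<exists>q\<in>\<rat>. f (2*pi) = q * pi ^ r"
proof -
  obtain c where c: "\<forall>i. c i \<in> \<rat>" "\<forall>x\<in>{0..2*pi}. f x = (\<Sum>i\<le>r. c i * pi ^ (r - i) * x ^ i)"
    using assms(1) unfolding polyw_def by blast
  have "f (2*pi) = (\<Sum>i\<le>r. c i * pi ^ (r - i) * (2*pi) ^ i)" using c(2) by simp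
  also have "\<dots> = (\<Sum>i\<le>r. (c i * 2 ^ i) * pi ^ r)"
  proof (intro sum.cong refl)
    fix i assume "i \<in> {..r}"
    then have "pi ^ (r - i) * pi ^ i = pi ^ r" by (simp add: power_add[symmetric])
    then show "c i * pi ^ (r - i) * (2*pi) ^ i = (c i * 2 ^ i) * pi ^ r"
      by (simp add: power_mult_distrib mult_ac)
  qed
  also have "\<dots> = (\<Sum>i\<le>r. c i * 2 ^ i) * pi ^ r" by (simp add: sum_distrib_right)
  finally show ?thesis using c(1) by (intro bexI[of _ "\<Sum>i\<le>r. c i * 2 ^ i"]) (auto intro: Rats_sum)
qed

lemma polyw_at_0: assumes "polyw r f" shows "\<exists>q\<in>\<rat>. f 0 = q * pi ^ r"
proof -
  obtain c where c: "\<forall>i. c i \<in> \<rat>" "\<forall>x\<in>{0..2*pi}. f x = (\<Sum>i\<le>r. c i * pi ^ (r - i) * x ^ i)"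
    using assms(1) unfolding polyw_def by blast
  have "f 0 = (\<Sum>i\<le>r. c i * pi ^ (r - i) * 0 ^ i)" using c(2) by simp
  also have "\<dots> = c 0 * pi ^ r" by (cases r) (simp_all add: sum.atMost_Suc_shift)
  finally show ?thesis using c(1) by blast
qed

lemma polyw_integ:
  assumes f: "polyw r f"
    and D: "\<And>x. 0 < x \<Longrightarrow> x < 2*pi \<Longrightarrow> (F has_real_derivative f x) (at x)"
    and C: "continuous_on {0..2*pi} F"
  shows "\<exists>g. polyw (Suc r) g \<and> (\<forall>x\<in>{0..2*pi}. F x = F 0 + g x)"
proof -
  obtain c where c: "\<forall>i. c i \<in> \<rat>" "\<forall>x\<in>{0..2*pi}. f x = (\<Sum>i\<le>r. c i * pi ^ (r - i) * x ^ i)"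
    using f unfolding polyw_def by blast
  define G where "G x = (\<Sum>i\<le>r. c i / real (Suc i) * pi ^ (r - i) * x ^ Suc i)" for x
  have DG: "(G has_real_derivative (\<Sum>i\<le>r. c i * pi ^ (r - i) * x ^ i)) (at x)" for x
  proof -
    have "((\<lambda>x. \<Sum>i\<le>r. c i / real (Suc i) * pi ^ (r - i) * x ^ Suc i) has_real_derivative
           (\<Sum>i\<le>r. c i / real (Suc i) * pi ^ (r - i) * (real (Suc i) * x ^ i))) (at x)"
    proof (intro DERIV_sum DERIV_cmult)
      fix n
      show "((\<lambda>x. x ^ Suc n) has_real_derivative real (Suc n) * x ^ n) (at x)"
        using DERIV_pow[of "Suc n" x] by simp
    qed
    moreover have "(\<Sum>i\<le>r. c i / real (Suc i) * pi ^ (r - i) * (real (Suc i) * x ^ i)) = (\<Sum>i\<le>r. c i * pi ^ (r - i) * x ^ i)"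
      by (intro sum.cong refl) (simp del: of_nat_Suc)
    ultimately show ?thesis unfolding G_def[abs_def] by simp
  qed
  have cG: "continuous_on {0..2*pi} G" unfolding G_def by (intro continuous_intros)
  have eq: "(\<lambda>x. F x - G x) x = (\<lambda>x. F x - G x) 0" if x: "x \<in> {0..2*pi}" for x
  proof (rule DERIV_isconst2[of 0 "2*pi"])
    show "continuous_on {0..2*pi} (\<lambda>x. F x - G x)" by (intro continuous_intros C cG)
    fix y assume y: "0 < y" "y < 2*pi"
    have "((\<lambda>x. F x - G x) has_real_derivative f y - (\<Sum>i\<le>r. c i * pi ^ (r - i) * y ^ i)) (at y)"
      by (intro DERIV_diff D DG y)
    then show "((\<lambda>x. F x - G x) has_real_derivative 0) (at y)" using c(2) y by simp
  qed (use x in auto)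
  have G0: "G 0 = 0" unfolding G_def by simp
  have pG: "polyw (Suc r) G" unfolding polyw_def
  proof (intro exI[of _ "\<lambda>i. if i = 0 then 0 else c (i - 1) / real i"] conjI allI ballI)
    show "(if i = 0 then 0 else c (i - 1) / real i) \<in> \<rat>" for i using c(1) by (auto intro: Rats_divide)
    fix x :: real
    show "G x = (\<Sum>i\<le>Suc r. (if i = 0 then 0 else c (i - 1) / real i) * pi ^ (Suc r - i) * x ^ i)"
      unfolding G_def sum.atMost_Suc_shift by (simp del: of_nat_Suc)
  qed
  have "\<forall>x\<in>{0..2*pi}. F x = F 0 + G x"
  proof
    fix x assume x: "x \<in> {0..2*pi}"
    have "F x - G x = F 0 - G 0" using eq[OF x] by simp
    then show "F x = F 0 + G x" using G0 by simp
  qed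
  then show ?thesis using pG by blast
qed



lemma zeta2: "zeta_val 2 = pi^2/6"
proof -
  have "(\<lambda>n. 1 / real (Suc n) ^ 2) sums (pi^2/6)"
    using inverse_squares_sums by (simp add: add.commute)
  then show ?thesis unfolding zeta_val_def by (simp add: sums_iff)
qed

lemma polyw_Cf2: "polyw 2 (Cf 2)"
proof -
  have p1: "polyw 1 (\<lambda>x. (x - pi)/2)"
  proof (rule polyw_cong[OF polyw_add[OF polyw_mono[of 0 1 "-1/2"] polyw_mono[of 1 1 "1/2"]]])
    fix x :: real
    show "- 1 / 2 * pi ^ (1 - 0) * x ^ 0 + 1 / 2 * pi ^ (1 - 1) * x ^ 1 = (x - pi) / 2"
      by (simp add: field_simps)
  qed auto
  have C: "continuous_on {0..2*pi} (Cf 2)" by (rule continuous_on_subset[OF Cf_cont]) auto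
  obtain g where g: "polyw 2 g" "\<forall>x\<in>{0..2*pi}. Cf 2 x = Cf 2 0 + g x"
  proof -
    have D: "\<And>x. 0 < x \<Longrightarrow> x < 2*pi \<Longrightarrow> (Cf 2 has_real_derivative (x - pi)/2) (at x)"
      by (rule Cf2_deriv)
    show ?thesis using polyw_integ[OF p1 D C] that unfolding Suc_1 by blast
  qed
  have z: "Cf 2 0 = 1/6 * pi ^ 2" using Cf_0[of 2] zeta2 by simp
  show ?thesis
  proof (rule polyw_cong[OF polyw_add[OF polyw_const[of "1/6" 2] g(1)]])
    fix x :: real assume x: "x \<in> {0..2*pi}"
    have e: "Cf 2 x = Cf 2 0 + g x" by (rule bspec[OF g(2) x])
    show "1 / 6 * pi ^ 2 + g x = Cf 2 x" unfolding e z ..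
  qed auto
qed

lemma polyw_Cf_even: "1 \<le> m \<Longrightarrow> polyw (2*m) (Cf (2*m))"
proof (induction m rule: nat_induct_at_least)
  case base
  then show ?case using polyw_Cf2 by simp
next
  case (Suc n)
  define r where "r = 2*n"
  have r3: "3 \<le> Suc r" "2 \<le> r" using Suc.hyps by (auto simp: r_def)
  have IH: "polyw r (Cf r)" using Suc.IH r_def by simp
  have CS1: "continuous_on {0..2*pi} (Sf (Suc r))" by (rule continuous_on_subset[OF Sf_cont]) (use r3 in auto)
  obtain g1 where g1: "polyw (Suc r) g1" "\<forall>x\<in>{0..2*pi}. Sf (Suc r) x = Sf (Suc r) 0 + g1 x"
    using polyw_integ[OF IH _ CS1] Sf_deriv[OF r3(1)] by auto
  have S1: "polyw (Suc r) (Sf (Suc r))"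
    by (rule polyw_cong[OF g1(1)]) (use g1(2) Sf_0 in auto)
  have r4: "3 \<le> Suc (Suc r)" using r3 by simp
  have CC2: "continuous_on {0..2*pi} (Cf (Suc (Suc r)))" by (rule continuous_on_subset[OF Cf_cont]) auto
  have nS1: "polyw (Suc r) (\<lambda>x. - Sf (Suc r) x)"
    using polyw_scale[OF S1, of "-1"] by simp
  obtain g2 where g2: "polyw (Suc (Suc r)) g2" "\<forall>x\<in>{0..2*pi}. Cf (Suc (Suc r)) x = Cf (Suc (Suc r)) 0 + g2 x"
    using polyw_integ[OF nS1 _ CC2] Cf_deriv[OF r4] by auto
  define z where "z = Cf (Suc (Suc r)) 0"
  have r5: "3 \<le> Suc (Suc (Suc r))" using r3 by simp
  define H where "H x = Sf (Suc (Suc (Suc r))) x - z * x" for x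
  have CH: "continuous_on {0..2*pi} H" unfolding H_def
    by (intro continuous_intros continuous_on_subset[OF Sf_cont]) auto
  have DH: "(H has_real_derivative g2 x) (at x)" if x: "0 < x" "x < 2*pi" for x
  proof -
    have "(H has_real_derivative Cf (Suc (Suc r)) x - z * 1) (at x)"
      unfolding H_def[abs_def] using Sf_deriv[OF r5, of x] by (intro DERIV_diff DERIV_cmult DERIV_ident) simp_all
    moreover have e: "Cf (Suc (Suc r)) x = Cf (Suc (Suc r)) 0 + g2 x"
      by (rule bspec[OF g2(2)]) (use x in auto)
    ultimately show ?thesis unfolding z_def by simp
  qed
  obtain g3 where g3: "polyw (Suc (Suc (Suc r))) g3" "\<forall>x\<in>{0..2*pi}. H x = H 0 + g3 x"
    using polyw_integ[OF g2(1) DH CH] by blast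
  obtain q where q: "q \<in> \<rat>" "g3 (2*pi) = q * pi ^ Suc (Suc (Suc r))"
    using polyw_at_2pi[OF g3(1)] by auto
  have "H (2*pi) = - z * (2*pi)" unfolding H_def using Sf_2pi by simp
  moreover have "H 0 = 0" unfolding H_def using Sf_0 by simp
  moreover have "H (2*pi) = H 0 + g3 (2*pi)" by (rule bspec[OF g3(2)]) auto
  ultimately have zz: "- z * (2*pi) = q * pi ^ Suc (Suc (Suc r))" using q(2) by simp
  have h: "pi * (-2*z) = pi * (q * pi ^ Suc (Suc r))"
  proof -
    have "pi * (-2*z) = - z * (2*pi)" by simp
    also have "\<dots> = q * pi ^ Suc (Suc (Suc r))" by (rule zz)
    also have "\<dots> = pi * (q * pi ^ Suc (Suc r))" by simp
    finally show ?thesis .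
  qed
  then have "-2*z = q * pi ^ Suc (Suc r)" by (simp only: mult_left_cancel[OF pi_neq_zero])
  then have zq: "z = (- q / 2) * pi ^ Suc (Suc r)" by simp
  have "polyw (Suc (Suc r)) (Cf (Suc (Suc r)))"
  proof (rule polyw_cong[OF polyw_add[OF polyw_const[of "- q / 2" "Suc (Suc r)"] g2(1)]])
    show "- q / 2 \<in> \<rat>" using q(1) by auto
    fix x :: real assume x: "x \<in> {0..2*pi}"
    have e: "Cf (Suc (Suc r)) x = z + g2 x"
      unfolding z_def by (rule bspec[OF g2(2) x])
    show "- q / 2 * pi ^ Suc (Suc r) + g2 x = Cf (Suc (Suc r)) x"
      unfolding e zq ..
  qed
  then show ?case by (simp add: r_def)
qed

lemma even_zeta: assumes "1 \<le> m" shows "\<exists>q\<in>\<rat>. zeta_val (2*m) = q * pi ^ (2*m)"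
proof -
  have "2 \<le> 2*m" using assms by simp
  then show ?thesis using polyw_at_0[OF polyw_Cf_even[OF assms]] Cf_0 by simp
qed



definition Hf :: "nat \<Rightarrow> real \<Rightarrow> real" where
  "Hf r = (if even r then Sf r else Cf r)"
definition sg :: "nat \<Rightarrow> real" where
  "sg r = (if even r then -1 else 1)"

lemma sg_sq: "sg r * sg r = 1" unfolding sg_def by simp
lemma sg_rat: "sg r \<in> \<rat>" unfolding sg_def by simp
lemma sg_nz: "sg r \<noteq> 0" unfolding sg_def by simp

lemma Hf_deriv: "2 \<le> r \<Longrightarrow> (Hf (Suc r) has_real_derivative sg r * Hf r t) (at t)"
  using Cf_deriv[of "Suc r" t] Sf_deriv[of "Suc r" t] unfolding Hf_def sg_def by auto

lemma Hf_cont: "2 \<le> r \<Longrightarrow> continuous_on A (Hf r)"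
  unfolding Hf_def using continuous_on_subset[OF Cf_cont] continuous_on_subset[OF Sf_cont] by auto

lemma Hf_0: "2 \<le> r \<Longrightarrow> Hf r 0 = (if even r then 0 else zeta_val r)"
  unfolding Hf_def using Cf_0 Sf_0 by auto

definition qclosed :: "real set \<Rightarrow> bool" where
  "qclosed V \<longleftrightarrow> 0 \<in> V \<and> (\<forall>x\<in>V. \<forall>y\<in>V. x + y \<in> V) \<and> (\<forall>c\<in>\<rat>. \<forall>x\<in>V. c * x \<in> V)"

abbreviation a3 :: real where "a3 \<equiv> pi / 3"

definition Kint :: "nat \<Rightarrow> nat \<Rightarrow> real" where
  "Kint q r = integral {0..a3} (\<lambda>t. (t - a3) ^ q * Hf r t)"

lemma Kint_has: "2 \<le> r \<Longrightarrow> ((\<lambda>t. (t - a3) ^ q * Hf r t) has_integral Kint q r) {0..a3}"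
  unfolding Kint_def
  by (intro integrable_integral integrable_continuous_real continuous_intros Hf_cont)

lemma Kclaim:
  assumes V: "qclosed V"
  shows "\<forall>r. 2 \<le> r \<longrightarrow> even (q + r) \<longrightarrow>
           (\<forall>s. odd s \<and> 3 \<le> s \<and> s < q + r + 1 \<longrightarrow> pi ^ (q + r + 1 - s) * zeta_val s \<in> V) \<longrightarrow>
           (\<exists>e y. e \<in> \<rat> \<and> e \<noteq> 0 \<and> y \<in> V \<and> Kint q r = e * (Cf (q + r + 1) a3 - zeta_val (q + r + 1)) + y)"
proof (induction q)
  case 0
  show ?case
  proof (intro allI impI)
    fix r :: nat assume r: "2 \<le> r" "even (0 + r)"
    have D: "(Hf (Suc r) has_real_derivative - Hf r t) (at t)" for t
      using Hf_deriv[OF r(1), of t] r(2) unfolding sg_def by simp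
    have "((\<lambda>t. - Hf r t) has_integral (Hf (Suc r) a3 - Hf (Suc r) 0)) {0..a3}"
      by (rule fundamental_theorem_of_calculus)
         (auto simp: has_real_derivative_iff_has_vector_derivative[symmetric] intro!: has_field_derivative_at_within D)
    from has_integral_neg[OF this]
    have "((\<lambda>t. Hf r t) has_integral - (Hf (Suc r) a3 - Hf (Suc r) 0)) {0..a3}"
      by simp
    moreover have "Hf (Suc r) a3 = Cf (Suc r) a3" "Hf (Suc r) 0 = zeta_val (Suc r)"
      using r Hf_0[of "Suc r"] unfolding Hf_def by auto
    ultimately have "((\<lambda>t. (t - a3) ^ 0 * Hf r t) has_integral - (Cf (Suc r) a3 - zeta_val (Suc r))) {0..a3}"
      by simp
    then have "Kint 0 r = (-1) * (Cf (0 + r + 1) a3 - zeta_val (0 + r + 1)) + 0"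
      using has_integral_unique[OF Kint_has[OF r(1), of 0]] by simp
    moreover have "0 \<in> V" using V unfolding qclosed_def by blast
    ultimately show "\<forall>s. odd s \<and> 3 \<le> s \<and> s < 0 + r + 1 \<longrightarrow> pi ^ (0 + r + 1 - s) * zeta_val s \<in> V \<Longrightarrow>
        \<exists>e y. e \<in> \<rat> \<and> e \<noteq> 0 \<and> y \<in> V \<and> Kint 0 r = e * (Cf (0 + r + 1) a3 - zeta_val (0 + r + 1)) + y"
      by (intro exI[of _ "-1"] exI[of _ 0]) auto
  qed
next
  case (Suc q)
  show ?case
  proof (intro allI impI)
    fix r :: nat
    assume r: "2 \<le> r" "even (Suc q + r)"
      and zs: "\<forall>s. odd s \<and> 3 \<le> s \<and> s < Suc q + r + 1 \<longrightarrow> pi ^ (Suc q + r + 1 - s) * zeta_val s \<in> V"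
    have r1: "2 \<le> Suc r" "even (q + Suc r)" using r by auto
    have zs1: "\<forall>s. odd s \<and> 3 \<le> s \<and> s < q + Suc r + 1 \<longrightarrow> pi ^ (q + Suc r + 1 - s) * zeta_val s \<in> V"
      using zs by simp
    obtain e y where ey: "e \<in> \<rat>" "e \<noteq> 0" "y \<in> V"
      "Kint q (Suc r) = e * (Cf (q + Suc r + 1) a3 - zeta_val (q + Suc r + 1)) + y"
      using Suc.IH r1 zs1 by blast
    define A where "A = Kint (Suc q) r"
    define B where "B = Kint q (Suc r)"
    define \<phi> where "\<phi> t = (t - a3) ^ Suc q * Hf (Suc r) t" for t
    have Dphi: "(\<phi> has_real_derivative
        (real (Suc q) * (t - a3) ^ q * Hf (Suc r) t + (t - a3) ^ Suc q * (sg r * Hf r t))) (at t)" for t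
    proof -
      have "((\<lambda>t. (t - a3) ^ Suc q) has_real_derivative real (Suc q) * (t - a3) ^ q) (at t)"
        using DERIV_pow[of "Suc q" "t - a3"] DERIV_chain2[OF DERIV_pow[of "Suc q" "t - a3"] DERIV_diff[OF DERIV_ident DERIV_const[of a3]]]
        by simp
      from DERIV_mult[OF this Hf_deriv[OF r(1), of t]]
      have d: "((\<lambda>x. (x - a3) ^ Suc q * Hf (Suc r) x) has_real_derivative
           real (Suc q) * (t - a3) ^ q * Hf (Suc r) t + sg r * Hf r t * (t - a3) ^ Suc q) (at t)" .
      have e: "sg r * Hf r t * (t - a3) ^ Suc q = (t - a3) ^ Suc q * (sg r * Hf r t)"
        by (simp add: mult_ac)
      show ?thesis using d unfolding e \<phi>_def[abs_def] .
    qed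
    have I: "((\<lambda>t. real (Suc q) * (t - a3) ^ q * Hf (Suc r) t + (t - a3) ^ Suc q * (sg r * Hf r t))
              has_integral (\<phi> a3 - \<phi> 0)) {0..a3}"
    proof (rule fundamental_theorem_of_calculus)
      fix t assume "t \<in> {0..a3}"
      show "(\<phi> has_vector_derivative
        (real (Suc q) * (t - a3) ^ q * Hf (Suc r) t + (t - a3) ^ Suc q * (sg r * Hf r t))) (at t within {0..a3})"
        unfolding has_real_derivative_iff_has_vector_derivative[symmetric]
        by (rule has_field_derivative_at_within[OF Dphi])
    qed simp
    have I2: "((\<lambda>t. real (Suc q) * (t - a3) ^ q * Hf (Suc r) t + (t - a3) ^ Suc q * (sg r * Hf r t))
              has_integral (real (Suc q) * B + sg r * A)) {0..a3}"
    proof -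
      have "((\<lambda>t. real (Suc q) * ((t - a3) ^ q * Hf (Suc r) t) + sg r * ((t - a3) ^ Suc q * Hf r t))
              has_integral (real (Suc q) * B + sg r * A)) {0..a3}"
        unfolding A_def B_def
        by (intro has_integral_add has_integral_mult_right Kint_has r1(1) r(1))
      then show ?thesis by (simp add: algebra_simps)
    qed
    have phi: "\<phi> a3 = 0" "\<phi> 0 = (- a3) ^ Suc q * Hf (Suc r) 0" unfolding \<phi>_def by auto
    have eqn: "real (Suc q) * B + sg r * A = - ((- a3) ^ Suc q * Hf (Suc r) 0)"
      using has_integral_unique[OF I I2] phi by simp
    define T where "T = - sg r * ((- a3) ^ Suc q * Hf (Suc r) 0)"
    have A_eq: "A = (- sg r * real (Suc q) * e) * (Cf (Suc q + r + 1) a3 - zeta_val (Suc q + r + 1))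
                    + ((- sg r * real (Suc q)) * y + T)"
    proof -
      have h1: "sg r * A = - ((- a3) ^ Suc q * Hf (Suc r) 0) - real (Suc q) * B"
        using eqn by linarith
      have h2: "A = sg r * (sg r * A)" using sg_sq[of r] by (simp add: mult.assoc[symmetric])
      have h3: "A = sg r * (- ((- a3) ^ Suc q * Hf (Suc r) 0) - real (Suc q) * B)"
        by (subst h2, subst h1) (rule refl)
      have idx: "q + Suc r + 1 = Suc q + r + 1" by simp
      show ?thesis unfolding h3 B_def ey(4) T_def idx by (simp add: algebra_simps)
    qed
    have TV: "T \<in> V"
    proof (cases "even (Suc r)")
      case True
      then have "T = 0" unfolding T_def using Hf_0[OF r1(1)] by simp
      then show ?thesis using V unfolding qclosed_def by simp
    next
      case False
      have s: "odd (Suc r)" "3 \<le> Suc r" "Suc r < Suc q + r + 1" using False r by auto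
      have mem: "pi ^ (Suc q + r + 1 - Suc r) * zeta_val (Suc r) \<in> V" using zs s by blast
      have Teq: "T = (- sg r * (- 1 / 3) ^ Suc q) * (pi ^ (Suc q + r + 1 - Suc r) * zeta_val (Suc r))"
        unfolding T_def using Hf_0[OF r1(1)] False
        by (simp add: power_mult_distrib[symmetric] power_divide)
      have cQ: "- sg r * (- 1 / 3) ^ Suc q \<in> \<rat>" using sg_rat by auto
      have cV: "\<forall>c\<in>\<rat>. \<forall>x\<in>V. c * x \<in> V" using V unfolding qclosed_def by blast
      show ?thesis unfolding Teq using cV cQ mem by blast
    qed
    have yV: "(- sg r * real (Suc q)) * y + T \<in> V"
    proof -
      have cV: "\<forall>c\<in>\<rat>. \<forall>x\<in>V. c * x \<in> V" and aV: "\<forall>x\<in>V. \<forall>y\<in>V. x + y \<in> V"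
        using V unfolding qclosed_def by blast+
      have "- sg r * real (Suc q) \<in> \<rat>" using sg_rat by (intro Rats_mult Rats_minus_iff[THEN iffD2] Rats_of_nat) auto
      then have "(- sg r * real (Suc q)) * y \<in> V" using cV ey(3) by blast
      then show ?thesis using aV TV by blast
    qed
    have eQ: "- sg r * real (Suc q) * e \<in> \<rat>" "- sg r * real (Suc q) * e \<noteq> 0"
      using ey(1,2) sg_rat sg_nz by auto
    show "\<exists>e y. e \<in> \<rat> \<and> e \<noteq> 0 \<and> y \<in> V \<and>
            Kint (Suc q) r = e * (Cf (Suc q + r + 1) a3 - zeta_val (Suc q + r + 1)) + y"
      using A_eq yV eQ unfolding A_def by blast
  qed
qed



lemma SLs_odd:
  assumes j: "odd j" "3 \<le> j" and V: "qclosed V"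
    and zs: "\<forall>s. odd s \<and> 3 \<le> s \<and> s < j \<longrightarrow> pi ^ (j - s) * zeta_val s \<in> V"
  shows "\<exists>e y. e \<in> \<rat> \<and> e \<noteq> 0 \<and> y \<in> V \<and> SLs [j] = e * (Cf j a3 - zeta_val j) + y"
proof -
  obtain q where q: "j = q + 3" using j(2) by (metis add.commute le_Suc_ex)
  have qe: "even q" using j(1) q by simp
  have S: "SLs [j] = integral {0..a3} (\<lambda>t. (t - a3) ^ Suc q * clA t)"
    unfolding SLs_def using q by simp
  define \<phi> where "\<phi> t = (t - a3) ^ Suc q * Sf 2 t" for t
  have cphi: "continuous_on {0..a3} \<phi>" unfolding \<phi>_def
    by (intro continuous_intros continuous_on_subset[OF Sf_cont]) auto
  have Dphi: "(\<phi> has_vector_derivative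
      (real (Suc q) * (t - a3) ^ q * Sf 2 t + (t - a3) ^ Suc q * (- clA t))) (at t)"
    if t: "t \<in> {0<..<a3}" for t
  proof -
    have t2: "0 < t" "t < 2*pi" using t by auto
    have "((\<lambda>t. (t - a3) ^ Suc q) has_real_derivative real (Suc q) * (t - a3) ^ q) (at t)"
      using DERIV_chain2[OF DERIV_pow[of "Suc q" "t - a3"] DERIV_diff[OF DERIV_ident DERIV_const[of a3]]]
      by simp
    from DERIV_mult[OF this Sf2_deriv[OF t2]]
    have d: "((\<lambda>x. (x - a3) ^ Suc q * Sf 2 x) has_real_derivative
         real (Suc q) * (t - a3) ^ q * Sf 2 t + - clA t * (t - a3) ^ Suc q) (at t)" .
    have e: "- clA t * (t - a3) ^ Suc q = (t - a3) ^ Suc q * (- clA t)" by (simp add: mult_ac)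
    show ?thesis using d unfolding e \<phi>_def[abs_def] has_real_derivative_iff_has_vector_derivative .
  qed
  have I: "((\<lambda>t. real (Suc q) * (t - a3) ^ q * Sf 2 t + (t - a3) ^ Suc q * (- clA t)) has_integral (\<phi> a3 - \<phi> 0)) {0..a3}"
    by (rule fundamental_theorem_of_calculus_interior[OF _ cphi Dphi]) auto
  have phi0: "\<phi> a3 - \<phi> 0 = 0" unfolding \<phi>_def using Sf_0 by simp
  have B: "((\<lambda>t. real (Suc q) * ((t - a3) ^ q * Sf 2 t)) has_integral real (Suc q) * Kint q 2) {0..a3}"
    using has_integral_mult_right[OF Kint_has[of 2 q]] by (simp add: Hf_def)
  have "((\<lambda>t. real (Suc q) * ((t - a3) ^ q * Sf 2 t) -
           (real (Suc q) * (t - a3) ^ q * Sf 2 t + (t - a3) ^ Suc q * (- clA t)))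
        has_integral (real (Suc q) * Kint q 2 - 0)) {0..a3}"
    using has_integral_diff[OF B I[unfolded phi0]] .
  then have "((\<lambda>t. (t - a3) ^ Suc q * clA t) has_integral (real (Suc q) * Kint q 2)) {0..a3}"
    by (simp add: algebra_simps)
  then have SK: "SLs [j] = real (Suc q) * Kint q 2" unfolding S by (rule integral_unique)
  have jj: "q + 2 + 1 = j" using q by simp
  have zs': "\<forall>s. odd s \<and> 3 \<le> s \<and> s < q + 2 + 1 \<longrightarrow> pi ^ (q + 2 + 1 - s) * zeta_val s \<in> V"
    unfolding jj by (rule zs)
  obtain e y where ey: "e \<in> \<rat>" "e \<noteq> 0" "y \<in> V"
    "Kint q 2 = e * (Cf (q + 2 + 1) a3 - zeta_val (q + 2 + 1)) + y"
    using Kclaim[OF V, of q] qe zs' by auto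
  have yV: "real (Suc q) * y \<in> V" using V ey(3) unfolding qclosed_def by auto
  show ?thesis
  proof (intro exI conjI)
    show "real (Suc q) * e \<in> \<rat>" "real (Suc q) * e \<noteq> 0" using ey by auto
    show "real (Suc q) * y \<in> V" by (rule yV)
    show "SLs [j] = real (Suc q) * e * (Cf j a3 - zeta_val j) + real (Suc q) * y"
      unfolding SK ey(4) jj by (simp add: algebra_simps)
  qed
qed

lemma cos_pi3: "cos (real n * (pi / 3)) = 1/2 - (if 2 dvd n then 1 else 0) - 3/2 * (if 3 dvd n then 1 else 0) + 3 * (if 6 dvd n then 1 else 0)"
proof -
  define i where "i = n mod 6"
  define k where "k = n div 6"
  have n: "n = 6 * k + i" unfolding i_def k_def by simp
  have i6: "i < 6" unfolding i_def by simp
  have arg: "real n * (pi / 3) = real i * (pi / 3) + real k * (2 * pi)"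
    unfolding n by (simp add: field_simps)
  have ck: "cos (real k * (2 * pi)) = 1" using cos_int_2pin[of "int k"] by (simp add: mult.commute)
  have sk: "sin (real k * (2 * pi)) = 0" using sin_npi[of "2*k"] by (simp add: mult.commute mult.left_commute)
  have c: "cos (real n * (pi / 3)) = cos (real i * (pi / 3))" unfolding arg cos_add ck sk by simp
  have d2: "2 dvd n \<longleftrightarrow> 2 dvd i" unfolding i_def by (rule dvd_mod_iff[symmetric]) simp
  have d3: "3 dvd n \<longleftrightarrow> 3 dvd i" unfolding i_def by (rule dvd_mod_iff[symmetric]) simp
  have d6: "6 dvd n \<longleftrightarrow> 6 dvd i" unfolding i_def by (rule dvd_mod_iff[symmetric]) simp
  have cases: "i = 0 \<or> i = 1 \<or> i = 2 \<or> i = 3 \<or> i = 4 \<or> i = 5" using i6 by auto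
  have c2: "cos (2 * (pi / 3)) = - 1/2"
  proof -
    have "2 * (pi / 3) = pi - pi / 3" by simp
    then show ?thesis using cos_pi_minus[of "pi/3"] cos_60 by simp
  qed
  have c4: "cos (4 * (pi / 3)) = - 1/2"
  proof -
    have "4 * (pi / 3) = pi / 3 + pi" by simp
    then show ?thesis using cos_periodic_pi[of "pi/3"] cos_60 by simp
  qed
  have c5: "cos (5 * (pi / 3)) = 1/2"
  proof -
    have "5 * (pi / 3) = 2 * pi - pi / 3" by simp
    then show ?thesis using cos_2pi_minus[of "pi/3"] cos_60 by simp
  qed
  have c3: "cos (3 * (pi / 3)) = - 1" by simp
  show ?thesis unfolding c d2 d3 d6 using cases c2 c3 c4 c5 cos_60 by auto
qed

lemma dvd_sums:
  assumes d: "0 < d" and j: "2 \<le> j"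
  shows "(\<lambda>n. (if d dvd n then 1 else 0) / real n ^ j) sums (zeta_val j / real d ^ j)"
proof -
  let ?f = "\<lambda>n. (if d dvd n then 1 else 0) / real n ^ j"
  have sm: "strict_mono (\<lambda>m. d * m)" using d by (auto simp: strict_mono_def)
  have z: "\<And>n. n \<notin> range (\<lambda>m. d * m) \<Longrightarrow> ?f n = 0" by (auto simp: dvd_def)
  have "(\<lambda>m. (1 / real d ^ j) * (1 / real m ^ j)) sums ((1 / real d ^ j) * zeta_val j)"
    by (rule sums_mult[OF zeta_sums0[OF j]])
  moreover have "(\<lambda>m. ?f (d * m)) = (\<lambda>m. (1 / real d ^ j) * (1 / real m ^ j))"
    by (auto simp: power_mult_distrib)
  ultimately have "(\<lambda>m. ?f (d * m)) sums (zeta_val j / real d ^ j)" by simp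
  then show ?thesis by (subst sums_mono_reindex[OF sm z, symmetric])
qed

lemma Cf_pi3:
  assumes j: "2 \<le> j"
  shows "Cf j a3 = (1/2 - 1 / 2 ^ j - 3/2 * (1 / 3 ^ j) + 3 * (1 / 6 ^ j)) * zeta_val j"
proof -
  have s0: "(\<lambda>n. 1/2 * (1 / real n ^ j)) sums (1/2 * zeta_val j)" by (rule sums_mult[OF zeta_sums0[OF j]])
  have s2: "(\<lambda>n. (if 2 dvd n then 1 else 0) / real n ^ j) sums (zeta_val j / real 2 ^ j)"
    by (rule dvd_sums) (use j in auto)
  have s3: "(\<lambda>n. 3/2 * ((if 3 dvd n then 1 else 0) / real n ^ j)) sums (3/2 * (zeta_val j / real 3 ^ j))"
    by (rule sums_mult[OF dvd_sums]) (use j in auto)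
  have s6: "(\<lambda>n. 3 * ((if 6 dvd n then 1 else 0) / real n ^ j)) sums (3 * (zeta_val j / real 6 ^ j))"
    by (rule sums_mult[OF dvd_sums]) (use j in auto)
  have all: "(\<lambda>n. 1/2 * (1 / real n ^ j) - (if 2 dvd n then 1 else 0) / real n ^ j
      - 3/2 * ((if 3 dvd n then 1 else 0) / real n ^ j) + 3 * ((if 6 dvd n then 1 else 0) / real n ^ j))
      sums (1/2 * zeta_val j - zeta_val j / real 2 ^ j - 3/2 * (zeta_val j / real 3 ^ j) + 3 * (zeta_val j / real 6 ^ j))"
    by (intro sums_add sums_diff s0 s2 s3 s6)
  have eq: "cos (real n * a3) / real n ^ j = 1/2 * (1 / real n ^ j) - (if 2 dvd n then 1 else 0) / real n ^ j
      - 3/2 * ((if 3 dvd n then 1 else 0) / real n ^ j) + 3 * ((if 6 dvd n then 1 else 0) / real n ^ j)" for n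
    unfolding cos_pi3 by (simp add: field_simps)
  have "(\<lambda>n. cos (real n * a3) / real n ^ j) sums
      (1/2 * zeta_val j - zeta_val j / real 2 ^ j - 3/2 * (zeta_val j / real 3 ^ j) + 3 * (zeta_val j / real 6 ^ j))"
    unfolding eq by (rule all)
  then have "Cf j a3 = 1/2 * zeta_val j - zeta_val j / real 2 ^ j - 3/2 * (zeta_val j / real 3 ^ j) + 3 * (zeta_val j / real 6 ^ j)"
    unfolding Cf_def by (rule sums_unique[symmetric])
  then show ?thesis by (simp add: algebra_simps)
qed

lemma kappa_lt: assumes "1 \<le> j" shows "(1/2 - 1 / 2 ^ j - 3/2 * (1 / 3 ^ j) + 3 * (1 / 6 ^ j) :: real) < 1"
proof -
  have "(3::real) \<le> 3 ^ j" using assms by (metis power_one_right power_increasing one_le_numeral)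
  then have "(3::real) * 2 ^ j \<le> 6 ^ j"
    using mult_right_mono[of 3 "3^j" "(2::real)^j"] by (simp add: power_mult_distrib[symmetric])
  then have "3 * (1 / (6::real) ^ j) \<le> 1 / 2 ^ j"
    by (simp add: field_simps)
  moreover have "0 \<le> 3/2 * (1 / (3::real) ^ j)" by simp
  ultimately show ?thesis by linarith
qed



lemma qspan_closed: "qclosed (qspan S)"
  unfolding qclosed_def
proof (intro conjI ballI)
  show "0 \<in> qspan S" unfolding qspan_def by (intro CollectI exI[of _ "{}"]) auto
next
  fix x y assume x: "x \<in> qspan S" and y: "y \<in> qspan S"
  obtain F c where F: "finite F" "F \<subseteq> S" "\<forall>s\<in>F. c s \<in> \<rat>" "x = (\<Sum>s\<in>F. c s * s)"
    using x unfolding qspan_def by blast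
  obtain G d where G: "finite G" "G \<subseteq> S" "\<forall>s\<in>G. d s \<in> \<rat>" "y = (\<Sum>s\<in>G. d s * s)"
    using y unfolding qspan_def by blast
  define e where "e s = (if s \<in> F then c s else 0) + (if s \<in> G then d s else 0)" for s
  have fin: "finite (F \<union> G)" using F G by simp
  have pt: "\<And>s. e s * s = (if s \<in> F then c s * s else 0) + (if s \<in> G then d s * s else 0)"
    unfolding e_def by (simp add: distrib_right)
  have "(\<Sum>s\<in>F \<union> G. e s * s) = (\<Sum>s\<in>F \<union> G. (if s \<in> F then c s * s else 0)) + (\<Sum>s\<in>F \<union> G. (if s \<in> G then d s * s else 0))"
    by (simp only: pt sum.distrib)
  also have "\<dots> = (\<Sum>s\<in>F. c s * s) + (\<Sum>s\<in>G. d s * s)"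
  proof -
    have "(\<Sum>s\<in>F \<union> G. (if s \<in> F then c s * s else 0)) = (\<Sum>s\<in>(F \<union> G) \<inter> F. c s * s)"
      by (rule sum.inter_restrict[OF fin, symmetric])
    moreover have "(\<Sum>s\<in>F \<union> G. (if s \<in> G then d s * s else 0)) = (\<Sum>s\<in>(F \<union> G) \<inter> G. d s * s)"
      by (rule sum.inter_restrict[OF fin, symmetric])
    moreover have "(F \<union> G) \<inter> F = F" "(F \<union> G) \<inter> G = G" by auto
    ultimately show ?thesis by simp
  qed
  finally have "x + y = (\<Sum>s\<in>F \<union> G. e s * s)" using F G by simp
  moreover have "\<forall>s\<in>F \<union> G. e s \<in> \<rat>" using F G unfolding e_def by auto
  ultimately show "x + y \<in> qspan S" unfolding qspan_def
    using fin F(2) G(2) by (intro CollectI exI[of _ "F \<union> G"] exI[of _ e] conjI) auto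
next
  fix q x :: real assume q: "q \<in> \<rat>" and x: "x \<in> qspan S"
  obtain F c where F: "finite F" "F \<subseteq> S" "\<forall>s\<in>F. c s \<in> \<rat>" "x = (\<Sum>s\<in>F. c s * s)"
    using x unfolding qspan_def by blast
  have "q * x = (\<Sum>s\<in>F. (q * c s) * s)" using F by (simp add: sum_distrib_left mult.assoc)
  moreover have "\<forall>s\<in>F. q * c s \<in> \<rat>" using F q by auto
  ultimately show "q * x \<in> qspan S" unfolding qspan_def
    using F(1,2) by (intro CollectI exI[of _ F] exI[of _ "\<lambda>s. q * c s"] conjI) auto
qed

lemma qspan_mem: "x \<in> S \<Longrightarrow> x \<in> qspan S"
  unfolding qspan_def by (intro CollectI exI[of _ "{x}"] exI[of _ "\<lambda>_. 1"]) auto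

lemma qspan_map:
  assumes x: "x \<in> qspan S" and k: "k \<noteq> 0" and ST: "(\<lambda>u. k * u) ` S \<subseteq> T"
  shows "k * x \<in> qspan T"
proof -
  obtain F c where F: "finite F" "F \<subseteq> S" "\<forall>s\<in>F. c s \<in> \<rat>" "x = (\<Sum>s\<in>F. c s * s)"
    using x unfolding qspan_def by blast
  have inj: "inj_on (\<lambda>u. k * u) F" using k by (auto simp: inj_on_def)
  have "(\<Sum>v\<in>(\<lambda>u. k * u) ` F. c (v / k) * v) = (\<Sum>u\<in>F. c (k * u / k) * (k * u))"
    by (rule sum.reindex[OF inj, unfolded comp_def])
  also have "\<dots> = k * x" using k F(4) by (simp add: sum_distrib_left mult_ac)
  finally have "k * x = (\<Sum>v\<in>(\<lambda>u. k * u) ` F. c (v / k) * v)" by simp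
  moreover have "finite ((\<lambda>u. k * u) ` F)" "(\<lambda>u. k * u) ` F \<subseteq> T" using F ST by auto
  moreover have "\<forall>v\<in>(\<lambda>u. k * u) ` F. c (v / k) \<in> \<rat>" using F k by auto
  ultimately show ?thesis unfolding qspan_def
    by (intro CollectI exI[of _ "(\<lambda>u. k * u) ` F"] exI[of _ "\<lambda>v. c (v / k)"] conjI) auto
qed

lemma qspan_qmult: "q \<in> \<rat> \<Longrightarrow> x \<in> qspan S \<Longrightarrow> q * x \<in> qspan S"
  using qspan_closed unfolding qclosed_def by blast
lemma qspan_add: "x \<in> qspan S \<Longrightarrow> y \<in> qspan S \<Longrightarrow> x + y \<in> qspan S"
  using qspan_closed unfolding qclosed_def by blast

lemma SLs_nil: "SLs [] = 1" unfolding SLs_def by simp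

lemma Sprime_shift:
  "(\<lambda>u. pi ^ (2*d) * u) ` Sprime s 1 \<subseteq> Sprime (s + 2*d) 1"
proof
  fix v assume "v \<in> (\<lambda>u. pi ^ (2*d) * u) ` Sprime s 1"
  then obtain m ks where mk: "v = pi ^ (2*d) * (pi ^ (2*m) * SLs ks)" "2*m + sum_list ks = s"
    "length ks \<le> 1" "\<forall>j\<in>set ks. 3 \<le> j \<and> odd j"
    unfolding Sprime_def by blast
  have "v = pi ^ (2*(d+m)) * SLs ks" using mk(1) by (simp add: power_add mult.assoc)
  moreover have "2*(d+m) + sum_list ks = s + 2*d" using mk(2) by simp
  ultimately show "v \<in> Sprime (s + 2*d) 1" unfolding Sprime_def using mk(3,4) by blast
qed

theorem main_all: "\<forall>k. 2 \<le> k \<longrightarrow> zeta_val k \<in> qspan (Sprime k 1)"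
proof (intro allI)
  fix k :: nat
  show "2 \<le> k \<longrightarrow> zeta_val k \<in> qspan (Sprime k 1)"
  proof (induction k rule: less_induct)
    case (less k)
    show ?case
    proof
      assume k2: "2 \<le> k"
      show "zeta_val k \<in> qspan (Sprime k 1)"
      proof (cases "even k")
        case True
        then obtain m where m: "k = 2*m" by blast
        have m1: "1 \<le> m" using k2 m by simp
        obtain q where q: "q \<in> \<rat>" "zeta_val (2*m) = q * pi ^ (2*m)" using even_zeta[OF m1] by blast
        have "pi ^ (2*m) * SLs [] \<in> Sprime k 1" unfolding Sprime_def using m by fastforce
        then have "pi ^ (2*m) \<in> qspan (Sprime k 1)" using SLs_nil qspan_mem by fastforce
        then show ?thesis using q qspan_qmult m by simp
      next
        case False
        have k3: "3 \<le> k" using k2 False by (cases "k = 2") auto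
        let ?V = "qspan (Sprime k 1)"
        have zs: "\<forall>s. odd s \<and> 3 \<le> s \<and> s < k \<longrightarrow> pi ^ (k - s) * zeta_val s \<in> ?V"
        proof (intro allI impI)
          fix s assume s: "odd s \<and> 3 \<le> s \<and> s < k"
          have zs: "zeta_val s \<in> qspan (Sprime s 1)" using less.IH s by auto
          have "even (k - s)" using s False by auto
          then obtain d where d: "k - s = 2*d" by blast
          have kk: "s + 2*d = k" using d s by arith
          have "pi ^ (2*d) * zeta_val s \<in> qspan (Sprime (s + 2*d) 1)"
            by (rule qspan_map[OF zs _ Sprime_shift]) simp
          then show "pi ^ (k - s) * zeta_val s \<in> ?V" unfolding d kk .
        qed
        obtain e y where ey: "e \<in> \<rat>" "e \<noteq> 0" "y \<in> ?V" "SLs [k] = e * (Cf k a3 - zeta_val k) + y"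
          using SLs_odd[OF False k3 qspan_closed zs] by blast
        define \<kappa> where "\<kappa> = (1/2 - 1 / 2 ^ k - 3/2 * (1 / 3 ^ k) + 3 * (1 / 6 ^ k) :: real)"
        have kq: "\<kappa> \<in> \<rat>" unfolding \<kappa>_def
          by (intro Rats_add Rats_diff Rats_mult Rats_divide Rats_power Rats_number_of Rats_1)
        have kl: "\<kappa> - 1 \<noteq> 0" using kappa_lt[of k] k3 unfolding \<kappa>_def by linarith
        have Cfk: "Cf k a3 = \<kappa> * zeta_val k" unfolding \<kappa>_def by (rule Cf_pi3[OF k2])
        have SV: "SLs [k] \<in> ?V"
        proof (rule qspan_mem)
          show "SLs [k] \<in> Sprime k 1" unfolding Sprime_def using False k3
            by (intro CollectI exI[of _ 0] exI[of _ "[k]"]) auto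
        qed
        have h: "SLs [k] + (-1) * y = (e * (\<kappa> - 1)) * zeta_val k"
          unfolding ey(4) Cfk by (simp add: algebra_simps)
        have ne: "e * (\<kappa> - 1) \<noteq> 0" using ey(2) kl by simp
        have eq: "zeta_val k = (1 / (e * (\<kappa> - 1))) * (SLs [k] + (-1) * y)"
          unfolding h using ne by simp
        have "SLs [k] + (-1) * y \<in> ?V" by (intro qspan_add SV qspan_qmult ey(3)) simp
        moreover have "1 / (e * (\<kappa> - 1)) \<in> \<rat>" using ey(1) kq by simp
        ultimately show ?thesis unfolding eq by (intro qspan_qmult)
      qed
    qed
  qed
qed

theorem theorem4:
  fixes k :: nat
  assumes "k \<ge> 2"
  shows "zeta_val k \<in> qspan (Sprime k 1)"
  using main_all assms by blast

end
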